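(* Fix $\varepsilon\in\{1,-1\}$ and $m\in\mathbb{R}$. The momentum map $\Phi : Y\to\mathfrak{sl}(2,\mathbb{C})$, $\Phi(A;h,h_1,h_2)=A\,U(h,h_1,h_2)\,A^{-1}$, is constant along every integral curve of the Euler--Lagrange system $(\mathcal{J},\omega)$.
   Context: For $(h,h_1,h_2)\in\mathbb{R}^3$ put \[ U(h,h_1,h_2)=\begin{pmatrix} i h_1 & 2i\varepsilon\left(h-\varepsilon\left(\frac{m}{3}+i\right)\right)\\[2pt] 2\left(h+\frac{2\varepsilon m}{3}\right)-i\varepsilon\left(h_2-4h^2+\frac{2\varepsilon m h}{3}+\frac{2m^2}{9}-2\right) & -ih_1\end{pmatrix}. \] The momentum space is $Y=\mathrm{SL}(2,\mathbb{C})\times\mathbb{R}^3$ with coordinates $(A;h,h_1,h_2)$. Write the Maurer--Cartan form of $\mathrm{SL}(2,\mathbb{C})$ (pulled back to $Y$) as $A^{-1}dA=\alpha+i\beta$ with $\alpha=\begin{pmatrix}\alpha^1_1&\alpha^1_2\\ \alpha^2_1&-\alpha^1_1\end{pmatrix}$, $\beta=\begin{pmatrix}\beta^1_1&\beta^1_2\\ \beta^2_1&-\beta^1_1\end{pmatrix}$ real-valued. Let $\omega=\beta^2_1$. The Euler--Lagrange system $(\mathcal{J},\omega)$ is the Pfaffian system on $Y$ generated by the 1-forms $\beta^1_1$, $\beta^1_2$, $\alpha^1_1$, $\alpha^1_2-\varepsilon\omega$, $\alpha^2_1-(2\varepsilon h+\frac{m}{3})\omega$, $dh-h_1\omega$,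 $dh_1-h_2\omega$, $dh_2-12hh_1\omega$, with independence condition $\omega\neq0$. An integral curve is a smooth curve $y:I\to Y$ on an interval $I$ on which all these generators pull back to zero and $y^\ast\omega$ vanishes nowhere. *)

theory Defs
  imports "HOL-Analysis.Analysis"
begin

definition U_mat :: "real \<Rightarrow> real \<Rightarrow> real \<Rightarrow> real \<Rightarrow> real \<Rightarrow> complex^2^2" where
  "U_mat eps m h h1 h2 = (\<chi> i j.
     if i = 1 \<and> j = 1 then \<i> * complex_of_real h1
     else if i = 1 \<and> j = 2 then
       2 * \<i> * complex_of_real eps *
         (complex_of_real h - complex_of_real eps * (complex_of_real (m / 3) + \<i>))
     else if i = 2 \<and> j = 1 then
       2 * complex_of_real (h + 2 * eps * m / 3)
       - \<i> * complex_of_real eps *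
         complex_of_real (h2 - 4 * h\<^sup>2 + 2 * eps * m * h / 3 + 2 * m\<^sup>2 / 9 - 2)
     else - \<i> * complex_of_real h1)"

definition momentum_map :: "real \<Rightarrow> real \<Rightarrow> complex^2^2 \<Rightarrow> real \<Rightarrow> real \<Rightarrow> real \<Rightarrow> complex^2^2" where
  "momentum_map eps m A h h1 h2 = A ** U_mat eps m h h1 h2 ** matrix_inv A"

text \<open>The pull-back of the Maurer--Cartan form is (A t)^{-1} A'(t) dt =: (alpha + i beta) dt;
  alpha_jk = Re, beta_jk = Im of its entries; omega = beta^2_1.\<close>

definition MC_pullback :: "complex^2^2 \<Rightarrow> complex^2^2 \<Rightarrow> complex^2^2" where
  "MC_pullback A A' = matrix_inv A ** A'"

definition EL_integral_curve ::
  "real \<Rightarrow> real \<Rightarrow> real set \<Rightarrow> (real \<Rightarrow> complex^2^2) \<Rightarrow> (real \<Rightarrow> real) \<Rightarrow> (real \<Rightarrow> real)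
     \<Rightarrow> (real \<Rightarrow> real) \<Rightarrow> bool" where
  "EL_integral_curve eps m I A h h1 h2 \<longleftrightarrow>
     is_interval I \<and>
     (\<forall>t\<in>I. det (A t) = 1) \<and>
     (\<exists>A' dh dh1 dh2. \<forall>t\<in>I.
        (A has_vector_derivative A' t) (at t within I) \<and>
        (h has_real_derivative dh t) (at t within I) \<and>
        (h1 has_real_derivative dh1 t) (at t within I) \<and>
        (h2 has_real_derivative dh2 t) (at t within I) \<and>
        (let M = MC_pullback (A t) (A' t); \<omega> = Im (M $ 2 $ 1) in
           Im (M $ 1 $ 1) = 0 \<and>
           Im (M $ 1 $ 2) = 0 \<and>
           Re (M $ 1 $ 1) = 0 \<and>
           Re (M $ 1 $ 2) - eps * \<omega> = 0 \<and>
           Re (M $ 2 $ 1) - (2 * eps * h t + m / 3) * \<omega> = 0 \<and>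
           dh t - h1 t * \<omega> = 0 \<and>
           dh1 t - h2 t * \<omega> = 0 \<and>
           dh2 t - 12 * h t * h1 t * \<omega> = 0 \<and>
           \<omega> \<noteq> 0))"

end

theory Submission
  imports Defs
begin

lemma UNIV_2: "(UNIV :: 2 set) = {1, 2}" using exhaust_2 by auto
lemma sum_2: "(\<Sum>k\<in>(UNIV::2 set). f k) = f 1 + f 2" by (simp add: UNIV_2)

definition adj2 :: "complex^2^2 \<Rightarrow> complex^2^2" where
 "adj2 A = (\<chi> i j. if i=1 \<and> j=1 then A$2$2 else if i=1 \<and> j=2 then -A$1$2
     else if i=2 \<and> j=1 then -A$2$1 else A$1$1)"

lemma adj2_nth[simp]: "adj2 A $1$1 = A$2$2" "adj2 A $1$2 = -A$1$2" "adj2 A $2$1 = -A$2$1" "adj2 A $2$2 = A$1$1"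
  by (simp_all add: adj2_def)

lemma mult_2: "((A::complex^2^2) ** B) $ i $ j = A$i$1*B$1$j + A$i$2*B$2$j"
  by (simp add: matrix_matrix_mult_def sum_2)

lemma mat_eq_2: "(X::complex^2^2) = Y \<longleftrightarrow> X$1$1 = Y$1$1 \<and> X$1$2 = Y$1$2 \<and> X$2$1 = Y$2$1 \<and> X$2$2 = Y$2$2"
  by (auto simp: vec_eq_iff forall_2)

lemma inv2:
  fixes A :: "complex^2^2"
  assumes "det A = 1"
  shows "matrix_inv A = adj2 A"
proof -
  have d: "A$1$1 * A$2$2 - A$1$2 * A$2$1 = 1" using assms by (simp add: det_2)
  have 1: "A ** adj2 A = mat 1" "adj2 A ** A = mat 1"
    using d by (simp_all add: mat_eq_2 mult_2 mat_def algebra_simps)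
  then have "\<exists>X. A ** X = mat 1 \<and> X ** A = mat 1" by blast
  then have X: "A ** matrix_inv A = mat 1" "matrix_inv A ** A = mat 1"
    unfolding matrix_inv_def by (metis (mono_tags, lifting) someI_ex)+
  have "adj2 A = adj2 A ** (A ** matrix_inv A)" by (simp add: X)
  also have "\<dots> = matrix_inv A" by (simp add: matrix_mul_assoc 1)
  finally show ?thesis by simp
qed

lemma U_nth:
  "U_mat eps m h h1 h2 $1$1 = \<i> * of_real h1"
  "U_mat eps m h h1 h2 $2$2 = - \<i> * of_real h1"
  "U_mat eps m h h1 h2 $1$2 = 2 * \<i> * complex_of_real eps *
         (complex_of_real h - complex_of_real eps * (complex_of_real (m / 3) + \<i>))"
  "U_mat eps m h h1 h2 $2$1 = 2 * complex_of_real (h + 2 * eps * m / 3)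
       - \<i> * complex_of_real eps *
         complex_of_real (h2 - 4 * h\<^sup>2 + 2 * eps * m * h / 3 + 2 * m\<^sup>2 / 9 - 2)"
  by (simp_all add: U_mat_def)


lemma deriv_zero:
  fixes a b c d u11 u12 u21 :: "real \<Rightarrow> complex" and m12 m21 :: complex
  assumes da: "(a has_vector_derivative b x * m21) (at x within S)"
    and db: "(b has_vector_derivative a x * m12) (at x within S)"
    and dc: "(c has_vector_derivative d x * m21) (at x within S)"
    and dd: "(d has_vector_derivative c x * m12) (at x within S)"
    and d11: "(u11 has_vector_derivative -(m12*u21 x - u12 x*m21)) (at x within S)"
    and d12: "(u12 has_vector_derivative 2*m12*u11 x) (at x within S)"
    and d21: "(u21 has_vector_derivative -2*m21*u11 x) (at x within S)"
  shows "((\<lambda>t. (a t*u11 t + b t*u21 t)*d t - (a t*u12 t - b t*u11 t)*c t) has_vector_derivative 0) (at x within S)"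
    "((\<lambda>t. -(a t*u11 t + b t*u21 t)*b t + (a t*u12 t - b t*u11 t)*a t) has_vector_derivative 0) (at x within S)"
    "((\<lambda>t. (c t*u11 t + d t*u21 t)*d t - (c t*u12 t - d t*u11 t)*c t) has_vector_derivative 0) (at x within S)"
    "((\<lambda>t. -(c t*u11 t + d t*u21 t)*b t + (c t*u12 t - d t*u11 t)*a t) has_vector_derivative 0) (at x within S)"
  by (rule has_vector_derivative_eq_rhs, (rule assms derivative_intros)+, simp add: algebra_simps)+

lemma core_id:
  fixes eps m h h1 h2 w :: real
  assumes "eps = 1 \<or> eps = -1"
  defines "m12 \<equiv> complex_of_real (eps*w)"
    and "m21 \<equiv> complex_of_real ((2*eps*h + m/3)*w) + \<i> * complex_of_real w"
  shows "\<i> * complex_of_real (h2*w) = -(m12 * U_mat eps m h h1 h2 $2$1 - U_mat eps m h h1 h2 $1$2 * m21)"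
    "2 * \<i> * complex_of_real eps * complex_of_real (h1*w) = 2*m12*(\<i> * of_real h1)"
    "2 * complex_of_real (h1*w) - \<i> * complex_of_real eps * complex_of_real (12*h*h1*w - 4*(2*h*(h1*w)) + 2*eps*m*(h1*w)/3)
       = -2*m21*(\<i> * of_real h1)"
  using assms(1)
  by (auto simp: U_nth m12_def m21_def algebra_simps power2_eq_square)


theorem corollary3p4:
  fixes eps m :: real and I :: "real set" and A :: "real \<Rightarrow> complex^2^2"
    and h h1 h2 :: "real \<Rightarrow> real"
  assumes "eps = 1 \<or> eps = -1"
    and "EL_integral_curve eps m I A h h1 h2"
  shows "\<forall>s\<in>I. \<forall>t\<in>I. momentum_map eps m (A s) (h s) (h1 s) (h2 s)
                      = momentum_map eps m (A t) (h t) (h1 t) (h2 t)"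
proof (cases "\<exists>z. I = {z}")
  case True
  then show ?thesis by auto
next
  case False
  from assms(2) have int: "is_interval I" and det1: "\<And>t. t\<in>I \<Longrightarrow> det (A t) = 1"
    unfolding EL_integral_curve_def by auto
  from assms(2) obtain A' dh dh1 dh2 where D: "\<forall>t\<in>I.
        (A has_vector_derivative A' t) (at t within I) \<and>
        (h has_real_derivative dh t) (at t within I) \<and>
        (h1 has_real_derivative dh1 t) (at t within I) \<and>
        (h2 has_real_derivative dh2 t) (at t within I) \<and>
        (let M = MC_pullback (A t) (A' t); \<omega> = Im (M $ 2 $ 1) in
           Im (M $ 1 $ 1) = 0 \<and>
           Im (M $ 1 $ 2) = 0 \<and>
           Re (M $ 1 $ 1) = 0 \<and>
           Re (M $ 1 $ 2) - eps * \<omega> = 0 \<and>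
           Re (M $ 2 $ 1) - (2 * eps * h t + m / 3) * \<omega> = 0 \<and>
           dh t - h1 t * \<omega> = 0 \<and>
           dh1 t - h2 t * \<omega> = 0 \<and>
           dh2 t - 12 * h t * h1 t * \<omega> = 0 \<and>
           \<omega> \<noteq> 0)"
    unfolding EL_integral_curve_def by blast
  define a where "a = (\<lambda>t. A t $1$1)"
  define b where "b = (\<lambda>t. A t $1$2)"
  define c where "c = (\<lambda>t. A t $2$1)"
  define d where "d = (\<lambda>t. A t $2$2)"
  define u11 where "u11 t = \<i> * complex_of_real (h1 t)" for t
  define u12 where "u12 t = U_mat eps m (h t) (h1 t) (h2 t) $1$2" for t
  define u21 where "u21 t = U_mat eps m (h t) (h1 t) (h2 t) $2$1" for t
  define P11 where "P11 t = (a t*u11 t + b t*u21 t)*d t - (a t*u12 t - b t*u11 t)*c t" for t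
  define P12 where "P12 t = -(a t*u11 t + b t*u21 t)*b t + (a t*u12 t - b t*u11 t)*a t" for t
  define P21 where "P21 t = (c t*u11 t + d t*u21 t)*d t - (c t*u12 t - d t*u11 t)*c t" for t
  define P22 where "P22 t = -(c t*u11 t + d t*u21 t)*b t + (c t*u12 t - d t*u11 t)*a t" for t
  have Phi: "momentum_map eps m (A t) (h t) (h1 t) (h2 t) $1$1 = P11 t \<and>
             momentum_map eps m (A t) (h t) (h1 t) (h2 t) $1$2 = P12 t \<and>
             momentum_map eps m (A t) (h t) (h1 t) (h2 t) $2$1 = P21 t \<and>
             momentum_map eps m (A t) (h t) (h1 t) (h2 t) $2$2 = P22 t" if "t \<in> I" for t
    using det1[OF that]
    by (simp add: momentum_map_def inv2 mult_2 U_nth P11_def P12_def P21_def P22_def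
        a_def b_def c_def d_def u11_def u12_def u21_def algebra_simps)
  have derivs: "(P11 has_vector_derivative 0) (at x within I) \<and> (P12 has_vector_derivative 0) (at x within I)
     \<and> (P21 has_vector_derivative 0) (at x within I) \<and> (P22 has_vector_derivative 0) (at x within I)"
    if x: "x \<in> I" for x
  proof -
    have nbot: "at x within I \<noteq> bot"
      using connected_imp_perfect[OF is_interval_connected[OF int] x] False
      by (auto simp: trivial_limit_within)
    from D x have dA: "(A has_vector_derivative A' x) (at x within I)"
      and dh: "(h has_real_derivative dh x) (at x within I)"
      and dh1: "(h1 has_real_derivative dh1 x) (at x within I)"
      and dh2: "(h2 has_real_derivative dh2 x) (at x within I)" by auto
    define M where "M = adj2 (A x) ** A' x"
    define w where "w = Im (M $ 2 $ 1)"
    have MC: "MC_pullback (A x) (A' x) = M"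
      by (simp add: MC_pullback_def M_def inv2 det1[OF x])
    have Dx: "let M = MC_pullback (A x) (A' x); \<omega> = Im (M $ 2 $ 1) in
           Im (M $ 1 $ 1) = 0 \<and>
           Im (M $ 1 $ 2) = 0 \<and>
           Re (M $ 1 $ 1) = 0 \<and>
           Re (M $ 1 $ 2) - eps * \<omega> = 0 \<and>
           Re (M $ 2 $ 1) - (2 * eps * h x + m / 3) * \<omega> = 0 \<and>
           dh x - h1 x * \<omega> = 0 \<and>
           dh1 x - h2 x * \<omega> = 0 \<and>
           dh2 x - 12 * h x * h1 x * \<omega> = 0 \<and>
           \<omega> \<noteq> 0" using D x by blast
    have C: "Im (M $ 1 $ 1) = 0 \<and> Im (M $ 1 $ 2) = 0 \<and> Re (M $ 1 $ 1) = 0 \<and>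
           Re (M $ 1 $ 2) - eps * w = 0 \<and> Re (M $ 2 $ 1) - (2 * eps * h x + m / 3) * w = 0 \<and>
           dh x - h1 x * w = 0 \<and> dh1 x - h2 x * w = 0 \<and> dh2 x - 12 * h x * h1 x * w = 0"
      using Dx unfolding MC Let_def w_def by auto
    have comp: "((\<lambda>t. A t $ p $ q) has_vector_derivative A' x $ p $ q) (at x within I)" for p q
      using bounded_linear.has_vector_derivative[OF
          bounded_linear_compose[OF bounded_linear_vec_nth bounded_linear_vec_nth] dA] .
    have da: "(a has_vector_derivative A' x $1$1) (at x within I)"
      and db: "(b has_vector_derivative A' x $1$2) (at x within I)"
      and dc: "(c has_vector_derivative A' x $2$1) (at x within I)"
      and dd: "(d has_vector_derivative A' x $2$2) (at x within I)"
      using comp by (simp_all add: a_def b_def c_def d_def)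
    have detx: "a t * d t - b t * c t = 1" if "t \<in> I" for t
      using det1[OF that] by (simp add: det_2 a_def b_def c_def d_def)
    have ddet: "((\<lambda>t. a t * d t - b t * c t) has_vector_derivative
        (a x * A' x $2$2 + A' x $1$1 * d x) - (b x * A' x $2$1 + A' x $1$2 * c x)) (at x within I)"
      by (rule derivative_intros da db dc dd)+
    have "((\<lambda>t. 1) has_vector_derivative
        (a x * A' x $2$2 + A' x $1$1 * d x) - (b x * A' x $2$1 + A' x $1$2 * c x)) (at x within I)"
      by (rule has_vector_derivative_transform[OF x _ ddet]) (simp add: detx)
    then have tr: "(a x * A' x $2$2 + A' x $1$1 * d x) - (b x * A' x $2$1 + A' x $1$2 * c x) = 0"
      using vector_derivative_unique_within[OF nbot _ has_vector_derivative_const] by blast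
    have Ment: "M$1$1 = d x * A' x $1$1 - b x * A' x $2$1" "M$1$2 = d x * A' x $1$2 - b x * A' x $2$2"
      "M$2$1 = a x * A' x $2$1 - c x * A' x $1$1" "M$2$2 = a x * A' x $2$2 - c x * A' x $1$2"
      by (simp_all add: M_def mult_2 a_def b_def c_def d_def)
    define m12 where "m12 = complex_of_real (eps*w)"
    define m21 where "m21 = complex_of_real ((2*eps*h x + m/3)*w) + \<i> * complex_of_real w"
    have M11: "M$1$1 = 0" using C by (simp add: complex_eq_iff)
    have M12: "M$1$2 = m12" using C by (simp add: complex_eq_iff m12_def)
    have M21: "M$2$1 = m21" using C by (simp add: complex_eq_iff m21_def w_def)
    have M22: "M$2$2 = 0" using tr M11 Ment by (simp add: algebra_simps)
    have dx: "a x * d x - b x * c x = 1" using detx[OF x] .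
    have e1: "A' x $1$1 = a x * M$1$1 + b x * M$2$1"
      using dx unfolding Ment by algebra
    have e2: "A' x $1$2 = a x * M$1$2 + b x * M$2$2"
      using dx unfolding Ment by algebra
    have e3: "A' x $2$1 = c x * M$1$1 + d x * M$2$1"
      using dx unfolding Ment by algebra
    have e4: "A' x $2$2 = c x * M$1$2 + d x * M$2$2"
      using dx unfolding Ment by algebra
    have da': "(a has_vector_derivative b x * m21) (at x within I)"
      using da e1 M11 M21 by simp
    have db': "(b has_vector_derivative a x * m12) (at x within I)"
      using db e2 M12 M22 by simp
    have dc': "(c has_vector_derivative d x * m21) (at x within I)"
      using dc e3 M11 M21 by simp
    have dd': "(d has_vector_derivative c x * m12) (at x within I)"
      using dd e4 M12 M22 by simp
    have dhw: "dh x = h1 x * w" "dh1 x = h2 x * w" "dh2 x = 12 * h x * h1 x * w" using C by auto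
    have cid1: "\<i> * complex_of_real (h2 x*w) = -(m12 * U_mat eps m (h x) (h1 x) (h2 x) $2$1 - U_mat eps m (h x) (h1 x) (h2 x) $1$2 * m21)"
      unfolding m12_def m21_def by (rule core_id(1)[OF assms(1)])
    have cid2: "2 * \<i> * complex_of_real eps * complex_of_real (h1 x*w) = 2*m12*(\<i> * of_real (h1 x))"
      unfolding m12_def m21_def by (rule core_id(2)[OF assms(1)])
    have cid3: "2 * complex_of_real (h1 x*w) - \<i> * complex_of_real eps * complex_of_real (12*h x*h1 x*w - 4*(2*h x*(h1 x*w)) + 2*eps*m*(h1 x*w)/3)
       = -2*m21*(\<i> * of_real (h1 x))"
      unfolding m12_def m21_def by (rule core_id(3)[OF assms(1)])
    have d11: "(u11 has_vector_derivative -(m12*u21 x - u12 x*m21)) (at x within I)"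
    proof -
      have "(u11 has_vector_derivative \<i> * complex_of_real (dh1 x)) (at x within I)"
        unfolding u11_def by (rule derivative_intros dh1)+
      then show ?thesis using cid1 by (simp add: dhw u21_def u12_def m12_def m21_def)
    qed
    have d12: "(u12 has_vector_derivative 2*m12*u11 x) (at x within I)"
    proof -
      have "(u12 has_vector_derivative 2 * \<i> * complex_of_real eps * complex_of_real (dh x)) (at x within I)"
        unfolding u12_def U_nth
        by (rule has_vector_derivative_eq_rhs, (rule derivative_intros dh)+, simp)
      moreover have "2 * \<i> * complex_of_real eps * complex_of_real (dh x) = 2*m12*u11 x"
        using cid2 by (simp only: dhw u11_def)
      ultimately show ?thesis by simp
    qed
    have d21: "(u21 has_vector_derivative -2*m21*u11 x) (at x within I)"
    proof -
      have "(u21 has_vector_derivative 2 * complex_of_real (dh x) - \<i> * complex_of_real eps *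
           complex_of_real (dh2 x - 4*(2*h x*dh x) + 2*eps*m*dh x/3)) (at x within I)"
      proof -
        have dq: "((\<lambda>t. h2 t - 4*(h t)\<^sup>2 + 2*eps*m*h t/3 + 2*m\<^sup>2/9 - 2) has_real_derivative
            (dh2 x - 4*(2*h x*dh x) + 2*eps*m*dh x/3)) (at x within I)"
          by (auto intro!: derivative_eq_intros dh dh2 simp: algebra_simps)
        show ?thesis
        unfolding u21_def U_nth
        by (rule has_vector_derivative_eq_rhs, rule has_vector_derivative_diff,
          rule has_vector_derivative_mult_right, rule has_vector_derivative_of_real,
          rule DERIV_add[OF dh DERIV_const],
          rule has_vector_derivative_mult_right, rule has_vector_derivative_of_real, rule dq) simp
      qed
      then show ?thesis using cid3 by (simp add: dhw u11_def m21_def)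
    qed
    show ?thesis
      using deriv_zero[OF da' db' dc' dd' d11 d12 d21]
      unfolding P11_def[abs_def] P12_def[abs_def] P21_def[abs_def] P22_def[abs_def] by blast
  qed
  have cv: "convex I" using int by (simp add: is_interval_convex)
  have const: "P s = P t" if "s \<in> I" "t \<in> I" "\<And>x. x \<in> I \<Longrightarrow> (P has_vector_derivative 0) (at x within I)"
    for P :: "real \<Rightarrow> complex" and s t
    using has_derivative_zero_unique[OF cv _ that(1,2), of P] that(3)
    by (simp add: has_vector_derivative_def)
  show ?thesis
  proof (intro ballI)
    fix s t assume st: "s \<in> I" "t \<in> I"
    have "P11 s = P11 t" "P12 s = P12 t" "P21 s = P21 t" "P22 s = P22 t"
      using const[OF st] derivs by blast+
    then show "momentum_map eps m (A s) (h s) (h1 s) (h2 s) = momentum_map eps m (A t) (h t) (h1 t) (h2 t)"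
      using Phi[OF st(1)] Phi[OF st(2)] by (simp add: mat_eq_2)
  qed
qed

end
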